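(* Let $m,n\in\mathbb{Z}^+$ be relatively prime, $\mathbb{H}_{m/n}=\{(z_1,z_2)\in\mathbb{C}^2:|z_1|^{m/n}<|z_2|<1\}$, and for $j\in\{0,1,\dots,m-1\}$ let $K_j$ be the sub-Bergman kernel defined below. Then for $(z,w)\in\mathbb{H}_{m/n}\times\mathbb{H}_{m/n}$, $$K_j(z,w)=\frac{n}{m\pi^2}\cdot\frac{f_j(s,t)\,g_j(t)\,s^j\,t^{\,n-1-E_j}}{(1-t)^2(t^n-s^m)^2},$$ where $s=z_1\bar w_1$, $t=z_2\bar w_2$, $E_j=\left\lfloor\frac{(j+1)n-1}{m}\right\rfloor$, and $$f_j(s,t)=(j+1)t^n+(m-j-1)s^m,\qquad g_j(t)=\left(j+1-\tfrac mnE_j\right)+\left(\tfrac mn+\tfrac mnE_j-j-1\right)t.$$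
   Context: Let $\mathcal{A}^2_{m/n}=\{(\alpha_1,\alpha_2)\in\mathbb{Z}^2:\alpha_1\ge0,\ n\alpha_1+m\alpha_2\ge -m-n+1\}$; these are exactly the $\alpha$ for which the monomial $z^\alpha=z_1^{\alpha_1}z_2^{\alpha_2}$ is holomorphic and square integrable (w.r.t. Lebesgue measure) on $\mathbb{H}_{m/n}$, and $\{z^\alpha\}_{\alpha\in\mathcal{A}^2_{m/n}}$ is an orthogonal basis of the Bergman space $A^2(\mathbb{H}_{m/n})$. For $j\in\{0,\dots,m-1\}$ let $\mathcal{G}_j=\{\alpha\in\mathcal{A}^2_{m/n}:\alpha_1\equiv j\pmod m\}$ and let $\mathcal{S}_j$ be the closed subspace of $A^2(\mathbb{H}_{m/n})$ spanned by $\{z^\alpha:\alpha\in\mathcal{G}_j\}$. The sub-Bergman kernel $K_j$ is the integral kernel of the orthogonal projection $L^2(\mathbb{H}_{m/n})\to\mathcal{S}_j$, namely $K_j(z,w)=\sum_{\alpha\in\mathcal{G}_j} z^\alpha\bar w^\alpha/\|z^\alpha\|^2_{L^2(\mathbb{H}_{m/n})}$. *)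

theory Defs
  imports "HOL-Analysis.Analysis"
begin

definition hartogs_H :: "nat \<Rightarrow> nat \<Rightarrow> (complex \<times> complex) set" where
  "hartogs_H m n = {z. cmod (fst z) powr (real m / real n) < cmod (snd z) \<and> cmod (snd z) < 1}"

definition adm_exps :: "nat \<Rightarrow> nat \<Rightarrow> (int \<times> int) set" where
  "adm_exps m n = {a. fst a \<ge> 0 \<and> int n * fst a + int m * snd a \<ge> - int m - int n + 1}"

definition exps_G :: "nat \<Rightarrow> nat \<Rightarrow> nat \<Rightarrow> (int \<times> int) set" where
  "exps_G m n j = {a \<in> adm_exps m n. fst a mod int m = int j}"

definition monom2 :: "int \<times> int \<Rightarrow> complex \<times> complex \<Rightarrow> complex" where
  "monom2 a z = fst z ^ nat (fst a) * snd z powi snd a"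

definition monom_norm_sq :: "nat \<Rightarrow> nat \<Rightarrow> int \<times> int \<Rightarrow> real" where
  "monom_norm_sq m n a =
     (\<integral> z. indicator (hartogs_H m n) z * (cmod (monom2 a z))\<^sup>2 \<partial>(lborel :: (complex \<times> complex) measure))"

definition sub_bergman :: "nat \<Rightarrow> nat \<Rightarrow> nat \<Rightarrow> complex \<times> complex \<Rightarrow> complex \<times> complex \<Rightarrow> complex" where
  "sub_bergman m n j z w =
     (\<Sum>\<^sub>\<infinity> a \<in> exps_G m n j.
        monom2 a z * cnj (monom2 a w) / complex_of_real (monom_norm_sq m n a))"

end

theory Submission
  imports Defs
begin


lemma emeasure_disc:
  assumes "0 \<le> c"
  shows "emeasure lborel {z::complex. (cmod z)^2 \<le> c} = ennreal (pi * c)"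
proof -
  have "{z::complex. (cmod z)^2 \<le> c} = cball 0 (sqrt c)"
    using assms by (auto simp: real_le_rsqrt dist_norm)
      (metis norm_ge_zero power_mono real_sqrt_pow2)
  moreover have "emeasure lborel (cball (0::complex) (sqrt c)) = ennreal (unit_ball_vol (DIM(complex)) * sqrt c ^ DIM(complex))"
    by (rule emeasure_cball) (use assms in auto)
  ultimately show ?thesis using assms by (simp add: unit_ball_vol_2)
qed

lemma emeasure_disc_neg:
  assumes "c < 0"
  shows "emeasure lborel {z::complex. (cmod z)^2 \<le> c} = 0"
proof -
  have "{z::complex. (cmod z)^2 \<le> c} = {}" using assms
    by (auto simp: not_le) (smt (verit) zero_le_power2)
  then show ?thesis by simp
qed

lemma emeasure_disc': "emeasure lborel {z::complex. (cmod z)^2 \<le> c} = ennreal (pi * max c 0)"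
  by (cases "c < 0") (auto simp: emeasure_disc emeasure_disc_neg max_def)

lemma radial_distr:
  "distr (lborel::complex measure) borel (\<lambda>z. (cmod z)^2) = density lborel (\<lambda>u. ennreal pi * indicator {0<..} u)"
proof (rule measure_eqI_generator_eq_countable[where E="range (\<lambda>(a, b). {a <.. b::real})" and \<Omega>=UNIV
      and A="range (\<lambda>n::nat. {- real n<..real n})"])
  show "Int_stable (range (\<lambda>(a, b). {a <.. b::real}))"
    unfolding Int_stable_def
    apply clarsimp
    subgoal for a b c d by (rule image_eqI[where x="(max a c, min b d)"]) auto
    done
  show "range (\<lambda>(a, b). {a<..b::real}) \<subseteq> Pow UNIV" by auto
  have sb: "sets (borel::real measure) = sigma_sets UNIV (range (\<lambda>(a, b). {a <.. b::real}))"
    by (subst borel_sigma_sets_Ioc) (simp add: sets_measure_of)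
  show "sets (distr (lborel::complex measure) borel (\<lambda>z. (cmod z)^2)) = sigma_sets UNIV (range (\<lambda>(a, b). {a <.. b::real}))"
    using sb by simp
  show "sets (density lborel (\<lambda>u. ennreal pi * indicator {0<..} u)) = sigma_sets UNIV (range (\<lambda>(a, b). {a <.. b::real}))"
    using sb by simp
  show "range (\<lambda>n::nat. {- real n<..real n}) \<subseteq> range (\<lambda>(a, b). {a <.. b::real})" by auto
  show "\<Union> (range (\<lambda>n::nat. {- real n<..real n})) = UNIV"
  proof (intro set_eqI iffI)
    fix x :: real assume "x \<in> UNIV" 
    obtain n :: nat where "\<bar>x\<bar> < n" using reals_Archimedean2 by blast
    then show "x \<in> \<Union> (range (\<lambda>n::nat. {- real n<..real n}))" by (auto intro!: exI[of _ n])
  qed auto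
  show "countable (range (\<lambda>n::nat. {- real n<..real n}))" by auto
  have key: "emeasure (distr (lborel::complex measure) borel (\<lambda>z. (cmod z)^2)) {a<..b} =
             emeasure (density lborel (\<lambda>u. ennreal pi * indicator {0<..} u)) {a<..b}" for a b :: real
  proof (cases "a \<le> b")
    case False
    then show ?thesis by simp
  next
    case True
    have "emeasure (distr (lborel::complex measure) borel (\<lambda>z. (cmod z)^2)) {a<..b} =
          emeasure lborel ({z::complex. (cmod z)^2 \<le> b} - {z::complex. (cmod z)^2 \<le> a})"
      by (subst emeasure_distr) (auto intro!: arg_cong[where f="emeasure lborel"])
    also have "\<dots> = ennreal (pi * max b 0) - ennreal (pi * max a 0)"
      using True by (subst emeasure_Diff) (auto simp: emeasure_disc')
    also have "\<dots> = ennreal (pi * (max b 0 - max a 0))"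
      using True by (subst ennreal_minus) (auto simp: algebra_simps max_def)
    also have "\<dots> = emeasure (density lborel (\<lambda>u. ennreal pi * indicator {0<..} u)) {a<..b}"
    proof -
      have "emeasure (density lborel (\<lambda>u. ennreal pi * indicator {0<..} u)) {a<..b}
            = (\<integral>\<^sup>+ u. ennreal pi * indicator ({a<..b} \<inter> {0<..}) u \<partial>lborel)"
        by (subst emeasure_density) (auto intro!: nn_integral_cong split: split_indicator)
      also have "\<dots> = ennreal pi * emeasure lborel ({a<..b} \<inter> {0<..})"
        by (rule nn_integral_cmult_indicator) auto
      also have "emeasure lborel ({a<..b} \<inter> {0<..}) = ennreal (max b 0 - max a 0)"
      proof (cases "b \<le> 0")
        case True
        then have "{a<..b} \<inter> {0<..} = {}" by auto
        then show ?thesis using True \<open>a \<le> b\<close> by (simp add: max_def)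
      next
        case False
        then have "{a<..b} \<inter> {0<..} = {max a 0<..b}" by auto
        then show ?thesis using False \<open>a \<le> b\<close> by (simp add: max_def)
      qed
      finally show ?thesis by (simp add: ennreal_mult')
    qed
    finally show ?thesis .
  qed
  show "\<And>X. X \<in> range (\<lambda>(a, b). {a<..b::real}) \<Longrightarrow>
         emeasure (distr (lborel::complex measure) borel (\<lambda>z. (cmod z)^2)) X =
         emeasure (density lborel (\<lambda>u. ennreal pi * indicator {0<..} u)) X"
    using key by auto
  show "\<And>X. X \<in> range (\<lambda>n::nat. {- real n<..real n}) \<Longrightarrow>
         emeasure (distr (lborel::complex measure) borel (\<lambda>z. (cmod z)^2)) X \<noteq> \<infinity>"
  proof -
    fix X assume "X \<in> range (\<lambda>n::nat. {- real n<..real n})"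
    then obtain n where Xn: "X = {- real n<..real n}" by auto
    have "emeasure (distr (lborel::complex measure) borel (\<lambda>z. (cmod z)^2)) {- real n<..real n}
      = emeasure (density lborel (\<lambda>u. ennreal pi * indicator {0<..} u)) {- real n<..real n}" by (rule key)
    also have "\<dots> \<le> emeasure (density lborel (\<lambda>u. ennreal pi)) {- real n<..real n}"
      by (subst (1 2) emeasure_density) (auto intro!: nn_integral_mono split: split_indicator)
    also have "\<dots> = (\<integral>\<^sup>+x. ennreal pi * indicator {-real n<..real n} x \<partial>lborel)"
      by (subst emeasure_density) (auto intro!: nn_integral_cong simp: mult.commute)
    also have "\<dots> = ennreal pi * emeasure lborel {-real n<..real n}"
      by (rule nn_integral_cmult_indicator) auto
    also have "\<dots> < \<infinity>"
      by (simp add: ennreal_mult_less_top)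
    finally show "emeasure (distr (lborel::complex measure) borel (\<lambda>z. (cmod z)^2)) X \<noteq> \<infinity>" using Xn by simp
  qed
qed

lemma nn_integral_radial:
  assumes [measurable]: "f \<in> borel_measurable borel"
  shows "(\<integral>\<^sup>+ z. f ((cmod z)^2) \<partial>(lborel::complex measure)) = ennreal pi * (\<integral>\<^sup>+ u. indicator {0<..} u * f u \<partial>lborel)"
proof -
  have "(\<integral>\<^sup>+ z. f ((cmod z)^2) \<partial>(lborel::complex measure)) = (\<integral>\<^sup>+ u. f u \<partial>distr (lborel::complex measure) borel (\<lambda>z. (cmod z)^2))"
    by (subst nn_integral_distr) auto
  also have "\<dots> = (\<integral>\<^sup>+ u. (ennreal pi * indicator {0<..} u) * f u \<partial>lborel)"
    unfolding radial_distr by (subst nn_integral_density) auto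
  also have "\<dots> = ennreal pi * (\<integral>\<^sup>+ u. indicator {0<..} u * f u \<partial>lborel)"
    by (subst nn_integral_cmult[symmetric]) (auto simp: mult.assoc)
  finally show ?thesis .
qed


lemma nn_int_powr_Ioo:
  assumes "c \<ge> 0" "p > -1"
  shows "(\<integral>\<^sup>+u. indicator {0<..<c} u * ennreal (u powr p) \<partial>lborel) = ennreal (c powr (p+1)/(p+1))"
proof -
  have "(\<integral>\<^sup>+u. indicator {0<..<c} u * ennreal (u powr p) \<partial>lborel) =
        (\<integral>\<^sup>+u. ennreal (u powr p) * indicator {0..c} u \<partial>lborel)"
  proof (intro nn_integral_cong_AE)
    show "AE x in lborel. indicator {0<..<c} x * ennreal (x powr p) = ennreal (x powr p) * indicator {0..c} x"
      using AE_lborel_singleton[of 0] AE_lborel_singleton[of c]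
      by eventually_elim (auto split: split_indicator)
  qed
  also have "\<dots> = ennreal (c powr (p+1)/(p+1))"
    by (rule nn_integral_has_integral_lebesgue') (use assms has_integral_powr_from_0 in auto)
  finally show ?thesis .
qed

lemma powr_lt_iff_sqrt:
  fixes u v r :: real
  assumes "u > 0" "v > 0" "r > 0"
  shows "sqrt u powr r < sqrt v \<longleftrightarrow> u < v powr (1/r)"
proof -
  have "sqrt u powr r = (u powr (r/2))" using assms
    by (simp add: powr_half_sqrt[symmetric] powr_powr)
  moreover have "sqrt v = (v powr (1/r)) powr (r/2)" using assms
    by (simp add: powr_half_sqrt[symmetric] powr_powr)
  moreover have "u powr (r/2) < w powr (r/2) \<longleftrightarrow> u < w" if "w \<ge> 0" for w
    using assms that
    by (metis half_gt_zero_iff less_eq_real_def not_less powr_less_mono2 powr_mono2)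
  ultimately show ?thesis by simp
qed


lemma measurable_powi_complex[measurable]:
  "(\<lambda>x::complex. x powi k) \<in> borel_measurable borel"
  unfolding power_int_def by measurable

lemma G_meas[measurable]:
  fixes r p2 :: real and k :: nat
  shows "(\<lambda>(u, v). if sqrt u powr r < sqrt v \<and> sqrt v < 1 then ennreal (u ^ k * v powr p2) else 0)
     \<in> borel_measurable (borel \<Otimes>\<^sub>M borel)"
  by measurable

lemma monom_norm_sq_eq:
  assumes m: "m > 0" and n: "n > 0" and adm: "a \<in> adm_exps m n"
  shows "monom_norm_sq m n a = pi^2 * real m / ((real_of_int (fst a) + 1) * (real m * (real_of_int (snd a) + 1) + real n * (real_of_int (fst a) + 1)))"
proof -
  define k where "k = nat (fst a)"
  define p2 where "p2 = real_of_int (snd a)"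
  define r where "r = real m / real n"
  have r: "r > 0" using m n by (simp add: r_def)
  have k: "real k = real_of_int (fst a)" using adm by (simp add: k_def adm_exps_def)
  define G where "G u v = (if sqrt u powr r < sqrt v \<and> sqrt v < 1 then ennreal (u ^ k * v powr p2) else 0)" for u v :: real
  have Gm: "(\<lambda>(u, v). G u v) \<in> borel_measurable (borel \<Otimes>\<^sub>M borel)"
    unfolding G_def by (rule G_meas)
  have Gm1[measurable]: "(\<lambda>u. G u v) \<in> borel_measurable borel" for v
    unfolding G_def by measurable
  define F where "F z = indicator (hartogs_H m n) z * (cmod (monom2 a z))\<^sup>2" for z :: "complex \<times> complex"
  have Fm[measurable]: "F \<in> borel_measurable borel"
    unfolding F_def hartogs_H_def monom2_def borel_prod[symmetric] by measurable
  have F_G: "ennreal (F z) = G ((cmod (fst z))^2) ((cmod (snd z))^2)" for z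
  proof (cases "z \<in> hartogs_H m n")
    case True
    then have z2: "cmod (snd z) > 0" "cmod (snd z) < 1" "cmod (fst z) powr r < cmod (snd z)"
      unfolding hartogs_H_def r_def by (auto intro: le_less_trans[rotated])
    have "(cmod (monom2 a z))\<^sup>2 = ((cmod (fst z))^2) ^ k * ((cmod (snd z))^2) powr p2"
    proof -
      let ?x = "cmod (fst z)" and ?y = "cmod (snd z)"
      have "cmod (monom2 a z) = ?x ^ k * ?y powr p2"
        using z2 unfolding monom2_def k_def p2_def
        by (simp add: norm_mult norm_power norm_power_int powr_real_of_int')
      moreover have "(?y powr p2)^2 = (?y^2) powr p2"
        using z2 by (simp add: power2_eq_square powr_mult)
      ultimately show ?thesis by (simp add: power_mult_distrib power_mult[symmetric] mult.commute[of k])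
    qed
    then show ?thesis using True z2 by (simp add: F_def G_def)
  next
    case False
    then show ?thesis unfolding F_def G_def hartogs_H_def r_def by auto
  qed
  have N1: "(\<integral>\<^sup>+ z. ennreal (F z) \<partial>(lborel::(complex\<times>complex) measure)) =
            (\<integral>\<^sup>+ z2. (\<integral>\<^sup>+ z1. G ((cmod z1)^2) ((cmod z2)^2) \<partial>lborel) \<partial>lborel)"
  proof -
    have "(\<integral>\<^sup>+ z. ennreal (F z) \<partial>(lborel::(complex\<times>complex) measure)) =
          (\<integral>\<^sup>+ z. G ((cmod (fst z))^2) ((cmod (snd z))^2) \<partial>(lborel \<Otimes>\<^sub>M lborel))"
      by (simp add: F_G lborel_prod)
    also have "\<dots> = (\<integral>\<^sup>+ z2. (\<integral>\<^sup>+ z1. G ((cmod z1)^2) ((cmod z2)^2) \<partial>lborel) \<partial>lborel)"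
    proof -
      have Gm2: "(\<lambda>z. G ((cmod (fst z))^2) ((cmod (snd z))^2)) \<in> borel_measurable (lborel \<Otimes>\<^sub>M (lborel::complex measure))"
        unfolding G_def by measurable
      show ?thesis using lborel_pair.nn_integral_snd[OF Gm2] by simp
    qed
    finally show ?thesis .
  qed
  define Hf where "Hf v = (\<integral>\<^sup>+ u. indicator {0<..} u * G u v \<partial>lborel)" for v
  have Hfm[measurable]: "Hf \<in> borel_measurable borel"
    unfolding Hf_def by (rule lborel.borel_measurable_nn_integral) (use Gm in measurable)
  have N2: "(\<integral>\<^sup>+ z2. (\<integral>\<^sup>+ z1. G ((cmod z1)^2) ((cmod z2)^2) \<partial>lborel) \<partial>lborel)
        = ennreal pi * (ennreal pi * (\<integral>\<^sup>+ v. indicator {0<..} v * Hf v \<partial>lborel))"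
  proof -
    have "(\<integral>\<^sup>+ z2. (\<integral>\<^sup>+ z1. G ((cmod z1)^2) ((cmod z2)^2) \<partial>lborel) \<partial>lborel)
          = (\<integral>\<^sup>+ z2. ennreal pi * Hf ((cmod z2)^2) \<partial>(lborel::complex measure))"
      unfolding Hf_def by (subst nn_integral_radial) auto
    also have "\<dots> = ennreal pi * (\<integral>\<^sup>+ v. indicator {0<..} v * (ennreal pi * Hf v) \<partial>lborel)"
      by (subst nn_integral_radial) auto
    also have "\<dots> = ennreal pi * (ennreal pi * (\<integral>\<^sup>+ v. indicator {0<..} v * Hf v \<partial>lborel))"
      by (subst nn_integral_cmult[symmetric]) (auto simp: mult.left_commute)
    finally show ?thesis .
  qed
  define q where "q = (real k + 1) / r + p2"
  have q: "q > -1"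
  proof -
    have that': "int n * fst a + int m * snd a \<ge> - int m - int n + 1" using adm by (simp add: adm_exps_def)
    then have "real n * real_of_int (fst a) + real m * p2 \<ge> - real m - real n + 1"
    proof -
      from that' have "real_of_int (- int m - int n + 1) \<le> real_of_int (int n * fst a + int m * snd a)"
        by (simp only: of_int_le_iff)
      then show ?thesis by (simp add: p2_def)
    qed
    then have "real n * (real k + 1) + real m * (p2 + 1) > 0" using k by (simp add: algebra_simps)
    then have "(real n * (real k + 1) + real m * (p2 + 1)) / real m > 0" using m by simp
    moreover have "(real n * (real k + 1) + real m * (p2 + 1)) / real m = q + 1"
      using m n by (simp add: q_def r_def field_simps)
    ultimately show ?thesis by simp
  qed
  have Hf_val: "indicator {0<..} v * Hf v = indicator {0<..<1} v * ennreal (v powr q / (real k + 1))" for v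
  proof (cases "v > 0 \<and> v < 1")
    case True
    then have v: "v > 0" "v < 1" by auto
    have "Hf v = (\<integral>\<^sup>+ u. (indicator {0<..<v powr (1/r)} u * ennreal (u powr real k)) * ennreal (v powr p2) \<partial>lborel)"
      unfolding Hf_def
    proof (intro nn_integral_cong)
      fix u :: real
      show "indicator {0<..} u * G u v = indicator {0<..<v powr (1/r)} u * ennreal (u powr real k) * ennreal (v powr p2)"
      proof (cases "u > 0")
        case True
        then show ?thesis using v r
          by (auto simp: G_def powr_lt_iff_sqrt powr_realpow ennreal_mult' split: split_indicator)
      qed (auto split: split_indicator)
    qed
    also have "\<dots> = ennreal ((v powr (1/r)) powr (real k + 1) / (real k + 1)) * ennreal (v powr p2)"
      by (subst nn_integral_multc) (auto simp: nn_int_powr_Ioo)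
    also have "\<dots> = ennreal (v powr q / (real k + 1))"
    proof -
      have e: "v powr (1 / r) * v powr (real k / r) = v powr ((1 + real k) / r)"
        by (simp add: powr_add[symmetric] add_divide_distrib)
      show ?thesis using v e by (simp add: ennreal_mult'[symmetric] powr_powr q_def powr_add field_simps)
    qed
    finally show ?thesis using True by simp
  next
    case False
    moreover have "Hf v = 0" if "v \<ge> 1"
      unfolding Hf_def using that by (auto simp: G_def)
    ultimately show ?thesis by (auto split: split_indicator)
  qed
  have N3: "(\<integral>\<^sup>+ v. indicator {0<..} v * Hf v \<partial>lborel) = ennreal (1 / ((q + 1) * (real k + 1)))"
  proof -
    have "(\<integral>\<^sup>+ v. indicator {0<..} v * Hf v \<partial>lborel) =
          (\<integral>\<^sup>+ v. indicator {0<..<1} v * ennreal (v powr q) * ennreal (1 / (real k + 1)) \<partial>lborel)"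
      by (intro nn_integral_cong) (simp add: Hf_val ennreal_mult'[symmetric] mult.assoc)
    also have "\<dots> = ennreal (1 powr (q+1) / (q+1)) * ennreal (1 / (real k + 1))"
      by (subst nn_integral_multc) (use q in \<open>auto simp: nn_int_powr_Ioo\<close>)
    also have "\<dots> = ennreal (1 / ((q + 1) * (real k + 1)))"
      using q by (simp add: ennreal_mult'[symmetric])
    finally show ?thesis .
  qed
  have tot: "(\<integral>\<^sup>+ z. ennreal (F z) \<partial>(lborel::(complex\<times>complex) measure)) = ennreal (pi^2 / ((q + 1) * (real k + 1)))"
    unfolding N1 N2 N3 using q by (simp add: ennreal_mult'[symmetric] power2_eq_square)
  have "monom_norm_sq m n a = enn2real (\<integral>\<^sup>+ z. ennreal (F z) \<partial>(lborel::(complex\<times>complex) measure))"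
  proof -
    have "monom_norm_sq m n a = integral\<^sup>L lborel F" unfolding monom_norm_sq_def F_def by simp
    also have "\<dots> = enn2real (\<integral>\<^sup>+ z. ennreal (F z) \<partial>(lborel::(complex\<times>complex) measure))"
      apply (rule integral_eq_nn_integral)
      using Fm apply simp
      by (auto simp: F_def)
    finally show ?thesis .
  qed
  also have "\<dots> = pi^2 / ((q + 1) * (real k + 1))"
    unfolding tot using q by simp
  also have "\<dots> = pi^2 * real m / ((real_of_int (fst a) + 1) * (real m * (real_of_int (snd a) + 1) + real n * (real_of_int (fst a) + 1)))"
    using m n q by (simp add: q_def r_def p2_def k field_simps)
  finally show ?thesis .
qed


lemma has_sum_prod_nat:
  fixes A B :: "nat \<Rightarrow> complex"
  assumes sA: "summable (\<lambda>k. norm (A k))" "A sums SA"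
      and sB: "summable (\<lambda>l. norm (B l))" "B sums SB"
  shows "((\<lambda>(k,l). A k * B l) has_sum (SA*SB)) UNIV"
proof -
  have hA: "(A has_sum SA) UNIV" by (rule norm_summable_imp_has_sum) (use sA in auto)
  have hB: "(B has_sum SB) UNIV" by (rule norm_summable_imp_has_sum) (use sB in auto)
  have nA: "((\<lambda>k. norm (A k)) has_sum (\<Sum>k. norm (A k))) UNIV"
    by (rule sums_nonneg_imp_has_sum) (use sA in auto)
  have nB: "((\<lambda>k. norm (B k)) has_sum (\<Sum>k. norm (B k))) UNIV"
    by (rule sums_nonneg_imp_has_sum) (use sB in auto)
  have abs: "(\<lambda>p. norm ((\<lambda>(k,l). A k * B l) p)) summable_on Sigma UNIV (\<lambda>_. UNIV)"
  proof (rule summable_on_SigmaI)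
    fix k :: nat
    show "((\<lambda>l. norm ((\<lambda>(k,l). A k * B l) (k, l))) has_sum (norm (A k) * (\<Sum>k. norm (B k)))) UNIV"
      using has_sum_cmult_right[OF nB, of "norm (A k)"] by (simp add: norm_mult)
  next
    show "(\<lambda>k. norm (A k) * (\<Sum>k. norm (B k))) summable_on UNIV"
      using has_sum_cmult_left[OF nA] by (auto simp: summable_on_def)
  qed auto
  have summ: "(\<lambda>(k,l). A k * B l) summable_on Sigma UNIV (\<lambda>_. UNIV)"
    by (rule abs_summable_summable) (use abs in simp)
  have "((\<lambda>(k,l). A k * B l) has_sum (SA*SB)) (Sigma UNIV (\<lambda>_. UNIV))"
  proof (rule has_sum_SigmaI[where g="\<lambda>k. A k * SB"])
    show "((\<lambda>l. (\<lambda>(k,l). A k * B l) (k, l)) has_sum A k * SB) UNIV" for k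
      using has_sum_cmult_right[OF hB, of "A k"] by simp
    show "((\<lambda>k. A k * SB) has_sum SA * SB) UNIV"
      using has_sum_cmult_left[OF hA] by simp
  qed (use summ in auto)
  then show ?thesis by simp
qed

lemma arith_geo_sums:
  fixes x c d :: complex
  assumes "norm x < 1"
  shows "(\<lambda>k. (c + d * of_nat k) * x ^ k) sums ((c - d) / (1 - x) + d / (1 - x)^2)"
    and "summable (\<lambda>k. norm ((c + d * of_nat k) * x ^ k))"
proof -
  have e: "(c + d * of_nat k) * x ^ k = (c - d) * x ^ k + d * (of_nat (Suc k) * x ^ k)" for k
    by (simp add: algebra_simps)
  show "(\<lambda>k. (c + d * of_nat k) * x ^ k) sums ((c - d) / (1 - x) + d / (1 - x)^2)"
  proof -
    have g1: "(\<lambda>k. x^k) sums (1/(1-x))" by (rule geometric_sums) fact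
    have g2: "(\<lambda>k. of_nat (Suc k) * x^k) sums (1/(1-x)^2)" by (rule geometric_deriv_sums) fact
    from sums_add[OF sums_mult[OF g1, of "c-d"] sums_mult[OF g2, of d]]
    show ?thesis unfolding e by simp
  qed
  have nx: "norm (norm x) < 1" using assms by simp
  have s1: "summable (\<lambda>k. (norm c + norm d * of_nat k) * norm x ^ k)"
  proof -
    have e2: "(norm c + norm d * of_nat k) * norm x ^ k = (norm c - norm d) * norm x ^ k + norm d * (of_nat (Suc k) * norm x ^ k)" for k
      by (simp add: algebra_simps)
    show ?thesis unfolding e2
      by (intro summable_add summable_mult sums_summable[OF geometric_deriv_sums[OF nx]]
          summable_geometric) (use assms in auto)
  qed
  show "summable (\<lambda>k. norm ((c + d * of_nat k) * x ^ k))"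
  proof (rule summable_comparison_test'[OF s1])
    fix k show "norm (norm ((c + d * of_nat k) * x ^ k)) \<le> (norm c + norm d * of_nat k) * norm x ^ k"
      by (simp add: norm_mult norm_power mult_right_mono norm_triangle_le)
  qed
qed


definition phi :: "nat \<Rightarrow> nat \<Rightarrow> nat \<Rightarrow> int \<Rightarrow> nat \<times> nat \<Rightarrow> int \<times> int" where
  "phi m n j E p = (int j + int m * int (fst p), - 1 - E - int n * int (fst p) + int (snd p))"

lemma E_le:
  assumes "m > 0" "E = (int (n*(j+1)) - 1) div int m"
  shows "int m * E \<le> int (n*(j+1)) - 1"
  using assms by (metis div_mult_mod_eq le_add_same_cancel1 mult.commute of_nat_0_less_iff pos_mod_sign)

lemma E_ge:
  assumes "m > 0" "E = (int (n*(j+1)) - 1) div int m" "int m * x \<ge> 1 - int (n*(j+1))"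
  shows "x \<ge> - E"
proof -
  define y where "y = -x"
  have "int m * y \<le> int (n*(j+1)) - 1" using assms(3) by (simp add: y_def)
  then have "(int m * y) div int m \<le> (int (n*(j+1)) - 1) div int m"
    by (rule zdiv_mono1) (use assms in auto)
  moreover have "(int m * y) div int m = y" using assms(1) by simp
  ultimately show ?thesis using assms by (simp add: y_def)
qed

lemma bij_phi:
  assumes m: "m > 0" and j: "j < m" and E: "E = (int (n*(j+1)) - 1) div int m"
  shows "bij_betw (phi m n j E) UNIV (exps_G m n j)"
  unfolding bij_betw_def
proof
  show "inj_on (phi m n j E) UNIV"
  proof (rule inj_onI)
    fix p p' assume "phi m n j E p = phi m n j E p'"
    then have 1: "int m * int (fst p) = int m * int (fst p')" and
      2: "- 1 - E - int n * int (fst p) + int (snd p) = - 1 - E - int n * int (fst p') + int (snd p')"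
      by (auto simp: phi_def)
    from 1 m have "fst p = fst p'" by simp
    with 2 have "snd p = snd p'" by simp
    with \<open>fst p = fst p'\<close> show "p = p'" by (simp add: prod_eq_iff)
  qed
  show "range (phi m n j E) = exps_G m n j"
  proof (intro set_eqI iffI)
    fix a assume "a \<in> range (phi m n j E)"
    then obtain k l where a: "a = phi m n j E (k, l)" by auto
    have le: "int m * E \<le> int (n*(j+1)) - 1" by (rule E_le) (use m E in auto)
    have "(int j + int m * int k) mod int m = int j" using j by simp
    moreover have "int n * (int j + int m * int k) + int m * (- 1 - E - int n * int k + int l) \<ge> - int m - int n + 1"
    proof -
      have eq: "int n * (int j + int m * int k) + int m * (- 1 - E - int n * int k + int l) = int (n*(j+1)) - int n - int m * E - int m + int m * int l"
        by (simp add: algebra_simps)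
      have "0 \<le> int m * int l" by simp
      then show ?thesis unfolding eq using le by linarith
    qed
    ultimately show "a \<in> exps_G m n j" unfolding a exps_G_def adm_exps_def phi_def by simp
  next
    fix a assume a: "a \<in> exps_G m n j"
    then have a1: "fst a \<ge> 0" and amod: "fst a mod int m = int j"
      and adm: "int n * fst a + int m * snd a \<ge> - int m - int n + 1"
      by (auto simp: exps_G_def adm_exps_def)
    define k where "k = fst a div int m"
    have k0: "k \<ge> 0" using a1 m by (simp add: k_def pos_imp_zdiv_nonneg_iff)
    have fa: "fst a = int j + int m * k"
      using amod by (metis k_def add.commute div_mult_mod_eq mult.commute)
    define l where "l = snd a + 1 + E + int n * k"
    have "int m * (snd a + 1 + int n * k) \<ge> 1 - int (n*(j+1))"
      using adm unfolding fa by (simp add: algebra_simps)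
    then have "snd a + 1 + int n * k \<ge> - E" by (rule E_ge[OF m E])
    then have l0: "l \<ge> 0" by (simp add: l_def)
    have "a = phi m n j E (nat k, nat l)"
      using k0 l0 fa by (simp add: phi_def prod_eq_iff l_def)
    then show "a \<in> range (phi m n j E)" by blast
  qed
qed


lemma H_facts:
  assumes "z \<in> hartogs_H m n" "m > 0" "n > 0"
  shows "0 < cmod (snd z)" "cmod (snd z) < 1" "cmod (fst z) ^ m < cmod (snd z) ^ n"
proof -
  have h: "cmod (fst z) powr (real m / real n) < cmod (snd z)" "cmod (snd z) < 1"
    using assms(1) by (auto simp: hartogs_H_def)
  show p: "0 < cmod (snd z)" using h(1) by (meson le_less_trans powr_ge_zero)
  show "cmod (snd z) < 1" by (rule h(2))
  show "cmod (fst z) ^ m < cmod (snd z) ^ n"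
  proof (cases "fst z = 0")
    case True
    then show ?thesis using p assms by (simp add: zero_power)
  next
    case False
    have "(cmod (fst z) powr (real m / real n)) ^ n < cmod (snd z) ^ n"
      using h(1) assms(3) by (intro power_strict_mono) auto
    moreover have "(cmod (fst z) powr (real m / real n)) ^ n = cmod (fst z) ^ m"
      using False assms by (simp add: powr_realpow[symmetric] powr_powr)
    ultimately show ?thesis by simp
  qed
qed


lemma SA_eq:
  fixes S T c m :: complex
  assumes T: "T \<noteq> 0" and TS: "T \<noteq> S"
  shows "(c - m) / (1 - S/T) + m / (1 - S/T)^2 = T * (c * T + (m - c) * S) / (T - S)^2"
proof -
  have T1: "1 - S/T = (T - S)/T" using T by (simp add: field_simps)
  have TS': "T - S \<noteq> 0" using TS by simp
  show ?thesis unfolding T1 using T TS' by (simp add: divide_simps) (simp add: algebra_simps power2_eq_square)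
qed
lemma SB_eq:
  fixes t D m :: complex
  assumes t1: "t \<noteq> 1"
  shows "(D - m) / (1 - t) + m / (1 - t)^2 = (D + (m - D) * t) / (1 - t)^2"
proof -
  have t1': "1 - t \<noteq> 0" using t1 by simp
  show ?thesis using t1' by (simp add: divide_simps) (simp add: algebra_simps power2_eq_square)
qed

lemma final_algebra:
  fixes S T t sj P :: complex and c1 mr nr Er D :: real
  assumes T: "T \<noteq> 0" and TS: "T \<noteq> S" and t1: "t \<noteq> 1" and m: "mr > 0" and n: "nr > 0"
    and D: "D = nr * c1 - mr * Er"
  shows "sj * P / complex_of_real (pi^2 * mr) *
           (((of_real c1 - of_real mr) / (1 - S/T) + of_real mr / (1 - S/T)^2) *
            ((of_real D - of_real mr) / (1 - t) + of_real mr / (1 - t)^2))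
     = complex_of_real (nr / (mr * pi\<^sup>2))
              * ((of_real c1 * T + (of_real mr - of_real c1) * S) *
                 (complex_of_real (c1 - mr / nr * Er)
                 + complex_of_real (mr / nr + mr / nr * Er - c1) * t) * sj * (P * T))
              / ((1 - t)\<^sup>2 * (T - S)\<^sup>2)"
proof -
  define g where "g = complex_of_real (c1 - mr / nr * Er) + complex_of_real (mr / nr + mr / nr * Er - c1) * t"
  define f where "f = of_real c1 * T + (of_real mr - of_real c1) * S"
  have hg: "of_real D + (of_real mr - of_real D) * t = of_real nr * g"
  proof -
    define a0 where "a0 = c1 - mr / nr * Er"
    define b0 where "b0 = mr / nr + mr / nr * Er - c1"
    have ea: "nr * a0 = D" using n unfolding a0_def D by (simp add: algebra_simps)
    have eb: "nr * b0 = mr - D" using n unfolding b0_def D by (simp add: algebra_simps)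
    have "of_real nr * g = complex_of_real (nr*a0) + complex_of_real (nr*b0) * t"
      unfolding g_def a0_def[symmetric] b0_def[symmetric] by (simp add: algebra_simps)
    then show ?thesis unfolding ea eb by simp
  qed
  have TS': "T - S \<noteq> 0" using TS by simp
  have t1': "1 - t \<noteq> 0" using t1 by simp
  have m0: "complex_of_real mr \<noteq> 0" "complex_of_real nr \<noteq> 0" using m n by auto
  show ?thesis
    unfolding SA_eq[OF T TS] SB_eq[OF t1] hg g_def[symmetric] f_def[symmetric]
    using TS' t1' m0 by (simp add: field_simps)
qed


theorem theorem2p4:
  fixes m n j :: nat and z w :: "complex \<times> complex"
  assumes "m > 0" and "n > 0" and "coprime m n" and "j < m"
    and "z \<in> hartogs_H m n" and "w \<in> hartogs_H m n"
  shows "let s = fst z * cnj (fst w); t = snd z * cnj (snd w);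
             E = \<lfloor>(real ((j + 1) * n) - 1) / real m\<rfloor>;
             f = of_nat (j + 1) * t ^ n + of_nat (m - j - 1) * s ^ m;
             g = complex_of_real (real (j + 1) - real m / real n * of_int E)
                 + complex_of_real (real m / real n + real m / real n * of_int E - real (j + 1)) * t
         in sub_bergman m n j z w
            = complex_of_real (real n / (real m * pi\<^sup>2))
              * (f * g * s ^ j * t powi (int n - 1 - E))
              / ((1 - t)\<^sup>2 * (t ^ n - s ^ m)\<^sup>2)"
proof -
  note m = \<open>m > 0\<close> and n = \<open>n > 0\<close> and j = \<open>j < m\<close>
  define s where "s = fst z * cnj (fst w)"
  define t where "t = snd z * cnj (snd w)"
  define E where "E = (int (n*(j+1)) - 1) div int m"
  have Efl: "\<lfloor>(real ((j + 1) * n) - 1) / real m\<rfloor> = E"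
  proof -
    have "(real ((j + 1) * n) - 1) / real m = real_of_int (int (n*(j+1)) - 1) / real_of_int (int m)"
      by (simp add: mult.commute)
    then show ?thesis unfolding E_def by (simp only: floor_divide_of_int_eq)
  qed
  have hz: "0 < cmod (snd z)" "cmod (snd z) < 1" "cmod (fst z) ^ m < cmod (snd z) ^ n"
    using H_facts[OF \<open>z \<in> hartogs_H m n\<close> m n] by auto
  have hw: "0 < cmod (snd w)" "cmod (snd w) < 1" "cmod (fst w) ^ m < cmod (snd w) ^ n"
    using H_facts[OF \<open>w \<in> hartogs_H m n\<close> m n] by auto
  have t0: "t \<noteq> 0" using hz hw by (auto simp: t_def)
  have tn: "cmod t < 1" using hz hw unfolding t_def
    by (simp add: norm_mult) (metis mult_strict_mono' less_le_trans mult_1_left norm_ge_zero order.strict_implies_order)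
  have st: "cmod s ^ m < cmod t ^ n"
    using hz hw unfolding s_def t_def
    by (simp add: norm_mult power_mult_distrib) (intro mult_strict_mono; simp)
  have q: "cmod (s^m / t^n) < 1"
    using st t0 by (simp add: norm_divide norm_power)
  have tnz: "t^n \<noteq> 0" using t0 by simp
  have TS: "t^n \<noteq> s^m"
  proof
    assume "t^n = s^m" then have "cmod t ^ n = cmod s ^ m" by (metis norm_power)
    with st show False by simp
  qed
  define D :: real where "D = real (n*(j+1)) - real m * real_of_int E"
  have Dge: "D \<ge> 1"
  proof -
    have "int m * E \<le> int (n*(j+1)) - 1" by (rule E_le) (use m E_def in auto)
    then have "real_of_int (int m * E) \<le> real_of_int (int (n*(j+1)) - 1)" by (simp only: of_int_le_iff)
    then show ?thesis unfolding D_def by simp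
  qed
  define A where "A k = (complex_of_real (real (j+1)) + complex_of_real (real m) * of_nat k) * (s^m/t^n)^k" for k :: nat
  define B where "B l = (complex_of_real D + complex_of_real (real m) * of_nat l) * t^l" for l :: nat
  define C where "C = s^j * t powi (-1 - E) / complex_of_real (pi^2 * real m)"
  define T where "T a = monom2 a z * cnj (monom2 a w) / complex_of_real (monom_norm_sq m n a)" for a
  have bij: "bij_betw (phi m n j E) UNIV (exps_G m n j)" by (rule bij_phi[OF m j E_def])
  have tm: "T (phi m n j E (k, l)) = C * (A k * B l)" for k l
  proof -
    let ?a = "phi m n j E (k, l)"
    have adm: "?a \<in> adm_exps m n" using bij by (auto simp: bij_betw_def exps_G_def)
    have a1: "fst ?a = int j + int m * int k" and a2: "snd ?a = - 1 - E - int n * int k + int l"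
      by (simp_all add: phi_def)
    have X: "real_of_int (fst ?a) + 1 = real (j+1) + real m * real k" unfolding a1 by simp
    have Y: "real m * (real_of_int (snd ?a) + 1) + real n * (real (j+1) + real m * real k) = D + real m * real l"
      unfolding a2 D_def by (simp add: algebra_simps)
    have Xp: "real (j+1) + real m * real k > 0"
    proof -
      have "0 \<le> real m * real k" by simp
      then show ?thesis by linarith
    qed
    have Yp: "D + real m * real l > 0" using Dge by (simp add: add_pos_nonneg)
    have nsq: "monom_norm_sq m n ?a = pi^2 * real m / ((real (j+1) + real m * real k) * (D + real m * real l))"
      using monom_norm_sq_eq[OF m n adm] unfolding X Y .
    have mon: "monom2 ?a z * cnj (monom2 ?a w) = s^(j + m*k) * t powi (- 1 - E - int n * int k + int l)"
    proof -
      have "nat (fst ?a) = j + m * k" unfolding a1 by (simp add: nat_add_distrib nat_mult_distrib)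
      then show ?thesis unfolding monom2_def s_def t_def a2
        by (simp add: power_mult_distrib power_int_mult_distrib)
    qed
    have p1: "s^(j + m*k) = s^j * (s^m)^k" by (simp add: power_add power_mult)
    have p2: "t powi (- 1 - E - int n * int k + int l) = t powi (-1 - E) * (inverse (t^n))^k * t^l"
    proof -
      have "t powi (- 1 - E - int n * int k + int l) = t powi (-1 - E) * t powi (- (int (n * k))) * t powi (int l)"
      proof -
        have e: "(- 1 - E - int n * int k + int l) = ((-1 - E) + (- int (n*k))) + int l" by simp
        have pa: "t powi (a + b) = t powi a * t powi b" for a b using t0 by (simp add: power_int_add)
        show ?thesis unfolding e pa ..
      qed
      also have "t powi (- (int (n * k))) = (inverse (t^n))^k"
        by (simp only: power_int_minus power_int_of_nat power_mult power_inverse)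
      finally show ?thesis by simp
    qed
    show ?thesis
      unfolding T_def nsq mon p1 p2 A_def B_def C_def
      using t0 Xp Yp m by (simp add: field_simps power_divide)
  qed
  define SA where "SA = (complex_of_real (real (j+1)) - complex_of_real (real m)) / (1 - s^m/t^n) + complex_of_real (real m) / (1 - s^m/t^n)^2"
  define SB where "SB = (complex_of_real D - complex_of_real (real m)) / (1 - t) + complex_of_real (real m) / (1 - t)^2"
  have hs: "((\<lambda>(k,l). A k * B l) has_sum (SA*SB)) UNIV"
    unfolding SA_def SB_def A_def B_def
    by (rule has_sum_prod_nat arith_geo_sums q tn)+
  have "sub_bergman m n j z w = (\<Sum>\<^sub>\<infinity>a\<in>exps_G m n j. T a)"
    unfolding sub_bergman_def T_def by simp
  also have "\<dots> = (\<Sum>\<^sub>\<infinity>p\<in>UNIV. T (phi m n j E p))"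
    by (rule infsum_reindex_bij_betw[OF bij, symmetric])
  also have "\<dots> = (\<Sum>\<^sub>\<infinity>p\<in>UNIV. C * (\<lambda>(k,l). A k * B l) p)"
    by (rule infsum_cong) (auto simp: tm)
  also have "\<dots> = C * (SA * SB)"
    by (rule infsumI) (rule has_sum_cmult_right[OF hs])
  finally have main: "sub_bergman m n j z w = C * (SA * SB)" .
  have fin: "C * (SA * SB) = complex_of_real (real n / (real m * pi\<^sup>2))
              * ((of_nat (j + 1) * t ^ n + of_nat (m - j - 1) * s ^ m) *
                 (complex_of_real (real (j + 1) - real m / real n * of_int E)
                 + complex_of_real (real m / real n + real m / real n * of_int E - real (j + 1)) * t)
                 * s ^ j * t powi (int n - 1 - E))
              / ((1 - t)\<^sup>2 * (t ^ n - s ^ m)\<^sup>2)"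
  proof -
    have t1: "t \<noteq> 1" using tn by auto
    have pw: "t powi (int n - 1 - E) = t powi (-1 - E) * t^n"
    proof -
      have e: "int n - 1 - E = (-1 - E) + int n" by simp
      show ?thesis unfolding e using power_int_add[of t "-1 - E" "int n"] t0 by simp
    qed
    have c: "of_nat (m - j - 1) = complex_of_real (real m) - complex_of_real (real (j+1))"
      using j by (simp add: of_nat_diff)
    have "C * (SA * SB) = s^j * t powi (-1 - E) / complex_of_real (pi^2 * real m) *
           (((of_real (real (j+1)) - of_real (real m)) / (1 - s^m/t^n) + of_real (real m) / (1 - s^m/t^n)^2) *
            ((of_real D - of_real (real m)) / (1 - t) + of_real (real m) / (1 - t)^2))"
      unfolding C_def SA_def SB_def by simp
    also have "\<dots> = complex_of_real (real n / (real m * pi\<^sup>2))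
              * ((of_real (real (j+1)) * t^n + (of_real (real m) - of_real (real (j+1))) * s^m) *
                 (complex_of_real (real (j+1) - real m / real n * real_of_int E)
                 + complex_of_real (real m / real n + real m / real n * real_of_int E - real (j+1)) * t) * s^j * (t powi (-1 - E) * t^n))
              / ((1 - t)\<^sup>2 * (t^n - s^m)\<^sup>2)"
      by (rule final_algebra[OF tnz TS t1]) (use m n in \<open>auto simp: D_def algebra_simps\<close>)
    finally show ?thesis unfolding pw c by (simp add: mult.assoc)
  qed
  show ?thesis
    unfolding Let_def Efl s_def[symmetric] t_def[symmetric] main fin ..
qed


end
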